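(* Let $p\geq3$ be prime and $n\geq 2$. (1) If $1\leq i<p-1$, then $\Lambda_{i,n}^{p^{n-1}}-1=\sum_{l=1}^{i}\frac{(-1)^l}{[l!]}\zeta_{2(p-1)}^l p^{\frac{l}{p-1}}+O\left(p^{1+\frac{1}{p(p-1)}}\right)$. (2) If $i\geq p-1$, then $\Lambda_{i,n}^{p^{n-1}}-1=\sum_{l=1}^{p-1} \frac{(-1)^l}{[l!]}\zeta_{2(p-1)}^l p^{\frac{l}{p-1}}+\zeta_{2(p-1)}\, p^{1+\frac{1}{p-1}-\frac{1}{p^{i-p+2}}}+O\left(p^{1+\frac{1}{p-1}}\right)$.
   Context: $\mathbb{L}_p$ is the $p$-adic Mal'cev–Neumann field of formal sums $\sum_{x\in\mathbb{Q}}[\alpha_x]p^x$ ($\alpha_x\in\bar{\mathbb{F}}_p$, $[\cdot]$ Teichmüller lift, well-ordered support), valuation $v_p$ = minimum of support, $p^x$ the element with support $\{x\}$ and coefficient $1$; $\alpha=\beta+O(p^x)$ means $v_p(\alpha-\beta)\geq x$. $\zeta_{2(p-1)}$ is (the Teichmüller lift of) a fixed primitive $2(p-1)$-th root of unity in $\bar{\mathbb{F}}_p$; $[k!]$ is the Teichmüller lift of $k!\bmod p$. For $n\ge2$ define $\Lambda_{i,n}=\sum_{k=0}^i \frac{(-1)^{kn}}{[k!]}\zeta_{2(p-1)}^k p^{\frac{k}{p^{n-1}(p-1)}}$ for $0\leq i\leq p-1$, and $\Lambda_{i,n}=\Lambda_{p-1,n}+ \sum_{l=n}^{i-p+n}(-1)^n\zeta_{2(p-1)}\,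 p^{\frac{1}{p^{n-2}(p-1)}-\frac{1}{p^l}}$ for $i\geq p$. *)

theory Defs
  imports "Berlekamp_Zassenhaus.Finite_Field" "HOL-Algebra.Algebraic_Closure_Type"
begin

text \<open>The residue field: an algebraic closure of F_p, where p = CARD('p).\<close>
type_synonym 'p Fpbar = "'p mod_ring alg_closure"

text \<open>Structure of the p-adic Mal'cev-Neumann field L_p used in the statement:
  a field 'L with the valuation v (on nonzero elements, values in Q),
  the Teichmueller lift T from the residue field, and the elements pw x = p^x.\<close>
definition Lp_structure ::
  "nat \<Rightarrow> ('k::field \<Rightarrow> 'L::field) \<Rightarrow> ('L \<Rightarrow> rat) \<Rightarrow> (rat \<Rightarrow> 'L) \<Rightarrow> bool" where
  "Lp_structure p T v pw \<longleftrightarrow>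
     (\<forall>x y. x \<noteq> 0 \<longrightarrow> y \<noteq> 0 \<longrightarrow> v (x * y) = v x + v y) \<and>
     (\<forall>x y. x \<noteq> 0 \<longrightarrow> y \<noteq> 0 \<longrightarrow> x + y \<noteq> 0 \<longrightarrow> min (v x) (v y) \<le> v (x + y)) \<and>
     (\<forall>x y. pw (x + y) = pw x * pw y) \<and> pw 1 = of_nat p \<and>
     (\<forall>x. pw x \<noteq> 0 \<and> v (pw x) = x) \<and>
     T 0 = 0 \<and> T 1 = 1 \<and> (\<forall>a b. T (a * b) = T a * T b) \<and>
     (\<forall>a. a \<noteq> 0 \<longrightarrow> v (T a) = 0) \<and>
     (\<forall>a b. T a + T b \<noteq> T (a + b) \<longrightarrow> 0 < v (T a + T b - T (a + b)))"

text \<open>alpha = beta + O(p^r), i.e. v_p(alpha - beta) >= r (with v_p(0) = infinity).\<close>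
definition bigO_eq :: "('L::field \<Rightarrow> rat) \<Rightarrow> 'L \<Rightarrow> 'L \<Rightarrow> rat \<Rightarrow> bool" where
  "bigO_eq v a b r \<longleftrightarrow> a = b \<or> r \<le> v (a - b)"

text \<open>Lambda_{i,n}; z is the Teichmueller lift of the chosen primitive 2(p-1)-th root of unity.\<close>
definition Lambda ::
  "nat \<Rightarrow> ('k::field \<Rightarrow> 'L::field) \<Rightarrow> (rat \<Rightarrow> 'L) \<Rightarrow> 'k \<Rightarrow> nat \<Rightarrow> nat \<Rightarrow> 'L" where
  "Lambda p T pw \<zeta> i n =
     (\<Sum>k = 0..min i (p - 1). (-1) ^ (k * n) / T (of_nat (fact k)) * T \<zeta> ^ k
         * pw (of_nat k / (of_nat p ^ (n - 1) * (of_nat p - 1))))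
     + (if p \<le> i then
          (\<Sum>l = n..i - p + n. (-1) ^ n * T \<zeta>
             * pw (1 / (of_nat p ^ (n - 2) * (of_nat p - 1)) - 1 / of_nat p ^ l))
        else 0)"

end

theory Submission
  imports Defs
begin



definition ca :: "nat \<Rightarrow> nat \<Rightarrow> int" where
  "ca p k = (if k < p then int (fact (p - 1) div fact k) else 0)"

definition GG :: "nat \<Rightarrow> int poly" where
  "GG p = (\<Sum>k<p. Polynomial.monom (ca p k) k)"

lemma ca_fact: "k < p \<Longrightarrow> ca p k * fact k = int (fact (p - 1))"
proof -
  assume "k < p"
  then have "fact k dvd (fact (p - 1) :: nat)" by (intro fact_dvd) auto
  then have "fact (p - 1) div fact k * fact k = (fact (p - 1) :: nat)" by simp
  then have "int (fact (p - 1) div fact k) * int (fact k) = int (fact (p - 1))"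
    by (metis of_nat_mult)
  then show ?thesis using \<open>k < p\<close> unfolding ca_def by simp
qed

lemma ca_rec: assumes "Suc j < p" shows "of_nat (Suc j) * ca p (Suc j) = ca p j"
proof -
  have "of_nat (Suc j) * ca p (Suc j) * fact j = ca p (Suc j) * fact (Suc j)"
    by (simp add: algebra_simps)
  also have "\<dots> = ca p j * fact j" using ca_fact[of "Suc j" p] ca_fact[of j p] assms by simp
  finally show ?thesis by simp
qed

lemma ca_last: "p > 0 \<Longrightarrow> ca p (p - 1) = 1"
  unfolding ca_def by simp

lemma ca_0: "p > 0 \<Longrightarrow> ca p 0 = int (fact (p - 1))"
  unfolding ca_def by simp

lemma GG_deriv: assumes "p > 0" shows "pderiv (GG p) = GG p - Polynomial.monom 1 (p - 1)"
proof -
  obtain q where q: "p = Suc q" using assms by (cases p) auto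
  have "pderiv (GG p) = (\<Sum>k<p. Polynomial.monom (of_nat k * ca p k) (k - 1))"
    unfolding GG_def by (simp add: pderiv_sum pderiv_monom)
  also have "\<dots> = (\<Sum>j<q. Polynomial.monom (of_nat (Suc j) * ca p (Suc j)) j)"
    unfolding q sum.lessThan_Suc_shift by simp
  also have "\<dots> = (\<Sum>j<q. Polynomial.monom (ca p j) j)"
  proof (intro sum.cong refl)
    fix j assume "j \<in> {..<q}"
    then have "Suc j < p" using q by simp
    then show "Polynomial.monom (of_nat (Suc j) * ca p (Suc j)) j = Polynomial.monom (ca p j) j"
      by (simp only: ca_rec)
  qed
  also have "\<dots> = GG p - Polynomial.monom 1 (p - 1)"
    unfolding GG_def q using ca_last[of "Suc q"] by simp
  finally show ?thesis .
qed

lemma GG_coeff0: "p > 0 \<Longrightarrow> coeff (GG p) 0 = int (fact (p - 1))"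
  unfolding GG_def by (simp add: coeff_sum coeff_monom ca_0)

lemma GG_rec:
  assumes "p > 0" "d < p - 1"
  shows "of_nat (Suc d) * coeff (GG p ^ p) (Suc d) = of_nat p * coeff (GG p ^ p) d"
proof -
  have "pderiv (GG p ^ p) = smult (of_nat p) (GG p ^ (p - 1) * (GG p - Polynomial.monom 1 (p - 1)))"
    by (simp add: pderiv_power GG_deriv assms)
  also have "\<dots> = smult (of_nat p) (GG p ^ p) - smult (of_nat p) (Polynomial.monom 1 (p - 1) * GG p ^ (p - 1))"
  proof -
    have "GG p ^ (p - 1) * GG p = GG p ^ p" using assms by (cases p) (auto simp: algebra_simps)
    then show ?thesis by (simp add: algebra_simps smult_diff_right)
  qed
  finally have "coeff (pderiv (GG p ^ p)) d = of_nat p * coeff (GG p ^ p) d"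
    using assms by (simp add: Polynomial.coeff_monom_mult)
  then show ?thesis by (simp add: coeff_pderiv)
qed

lemma GG_low:
  assumes "p > 0" "d \<le> p - 1"
  shows "fact d * coeff (GG p ^ p) d = int p ^ d * int (fact (p - 1)) ^ p"
  using assms(2)
proof (induction d)
  case 0 then show ?case using assms by (simp add: coeff_0_power GG_coeff0)
next
  case (Suc d)
  have "fact (Suc d) * coeff (GG p ^ p) (Suc d) = fact d * (of_nat (Suc d) * coeff (GG p ^ p) (Suc d))"
    by (simp add: algebra_simps)
  also have "\<dots> = fact d * (of_nat p * coeff (GG p ^ p) d)" using GG_rec[of p d] Suc assms by simp
  also have "\<dots> = int p * (fact d * coeff (GG p ^ p) d)" by (simp add: algebra_simps)
  also have "\<dots> = int p ^ Suc d * int (fact (p - 1)) ^ p" using Suc by simp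
  finally show ?case .
qed

lemma GG_1: "p > 1 \<Longrightarrow> coeff (GG p ^ p) 1 = int p * int (fact (p - 1)) ^ p"
  using GG_low[of p 1] by simp

lemma GG_0: "p > 0 \<Longrightarrow> coeff (GG p ^ p) 0 = int (fact (p - 1)) ^ p"
  using GG_low[of p 0] by simp

lemma GG_mid:
  assumes "Factorial_Ring.prime p" "2 \<le> d" "d < p"
  shows "int p ^ 2 dvd coeff (GG p ^ p) d"
proof -
  have p0: "p > 0" using assms by auto
  have e: "fact d * coeff (GG p ^ p) d = int p ^ d * int (fact (p - 1)) ^ p"
    using GG_low[of p d] assms p0 by simp
  have "int p ^ 2 dvd int p ^ d" using assms by (simp add: le_imp_power_dvd)
  then have "int p ^ 2 dvd fact d * coeff (GG p ^ p) d" unfolding e by simp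
  moreover have "coprime (int p ^ 2) (fact d)"
  proof -
    have "\<not> p dvd fact d" using assms prime_dvd_fact_iff[of p d] by simp
    then have "\<not> int p dvd fact d" by (metis of_nat_dvd_iff of_nat_fact)
    then have "coprime (int p) (fact d)" using assms by (simp add: prime_imp_coprime)
    then show ?thesis by simp
  qed
  ultimately show ?thesis using coprime_dvd_mult_right_iff by blast
qed

lemma poly_frob:
  assumes "Factorial_Ring.prime p" "finite A"
  shows "\<exists>HH. (\<Sum>k\<in>A. Polynomial.monom (cc k :: int) k) ^ p = (\<Sum>k\<in>A. Polynomial.monom (cc k ^ p) (k * p)) + smult (int p) HH"
  using assms(2)
proof (induction A rule: finite_induct)
  case empty
  have "p > 0" using assms by (simp add: prime_gt_0_nat)
  then show ?case by (intro exI[of _ 0]) (simp add: power_0_left)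
next
  case (insert k F)
  then obtain HH where HH: "(\<Sum>k\<in>F. Polynomial.monom (cc k) k) ^ p = (\<Sum>k\<in>F. Polynomial.monom (cc k ^ p) (k * p)) + smult (int p) HH" by blast
  define Xs where "Xs = (\<Sum>k\<in>F. Polynomial.monom (cc k) k)"
  define m where "m = Polynomial.monom (cc k) k"
  have set: "{..p} = insert 0 (insert p {1..<p})" using assms by (auto simp: prime_gt_0_nat)
  have p0: "p > 0" using assms by (simp add: prime_gt_0_nat)
  define R where "R = (\<Sum>j\<in>{1..<p}. of_nat ((p choose j) div p) * m ^ j * Xs ^ (p - j))"
  have "(m + Xs) ^ p = (\<Sum>j\<le>p. of_nat (p choose j) * m ^ j * Xs ^ (p - j))" using binomial_ring[of m Xs p] .
  also have "\<dots> = Xs ^ p + m ^ p + (\<Sum>j\<in>{1..<p}. of_nat (p choose j) * m ^ j * Xs ^ (p - j))"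
    unfolding set using p0 by simp
  also have "(\<Sum>j\<in>{1..<p}. of_nat (p choose j) * m ^ j * Xs ^ (p - j)) = smult (int p) R"
  proof -
    have "\<And>j. j \<in> {1..<p} \<Longrightarrow> (p choose j) = p * ((p choose j) div p)"
      using dvd_choose_prime assms by auto
    have ofn: "(of_nat (a * b) :: int poly) = smult (int a) (of_nat b)" for a b
      by (simp add: of_nat_poly)
    have "(of_nat (p choose j) :: int poly) * m ^ j * Xs ^ (p - j) = smult (int p) (of_nat ((p choose j) div p) * m ^ j * Xs ^ (p - j))"
      if "j \<in> {1..<p}" for j
    proof -
      have "(of_nat (p choose j) :: int poly) = of_nat (p * ((p choose j) div p))" using that \<open>\<And>j. j \<in> {1..<p} \<Longrightarrow> (p choose j) = p * ((p choose j) div p)\<close> by metis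
      then show ?thesis unfolding ofn by (simp add: mult_smult_left)
    qed
    then show ?thesis unfolding R_def by (simp add: smult_sum2)
  qed
  finally have e: "(m + Xs) ^ p = Xs ^ p + m ^ p + smult (int p) R" .
  have "(\<Sum>k\<in>insert k F. Polynomial.monom (cc k) k) ^ p = (m + Xs) ^ p"
    using insert(1,2) by (simp add: Xs_def m_def)
  also have "\<dots> = Xs ^ p + m ^ p + smult (int p) R" by (rule e)
  also have "Xs ^ p = (\<Sum>k\<in>F. Polynomial.monom (cc k ^ p) (k * p)) + smult (int p) HH"
    unfolding Xs_def by (rule HH)
  also have "m ^ p = Polynomial.monom (cc k ^ p) (k * p)" unfolding m_def by (simp add: monom_power)
  finally show ?case using insert(1,2)
    by (intro exI[of _ "HH + R"]) (simp add: smult_add_right algebra_simps)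
qed


lemma GG_high:
  assumes "Factorial_Ring.prime p"
  shows "\<exists>HH. \<forall>d. coeff (GG p ^ p) d = (\<Sum>k<p. if k * p = d then ca p k ^ p else 0) + int p * coeff HH d"
proof -
  obtain HH where HH: "GG p ^ p = (\<Sum>k<p. Polynomial.monom (ca p k ^ p) (k * p)) + smult (int p) HH"
    using poly_frob[OF assms, of "{..<p}" "ca p"] unfolding GG_def by auto
  show ?thesis
    by (intro exI[of _ HH] allI) (simp add: HH coeff_sum coeff_monom)
qed

locale lps =
  fixes p :: nat and T :: "'k::field \<Rightarrow> 'L::field" and v :: "'L \<Rightarrow> rat" and pw :: "rat \<Rightarrow> 'L"
  assumes Lp: "Lp_structure p T v pw" and pprime: "Factorial_Ring.prime p" and p3: "p \<ge> 3"
    and charp: "CHAR('k) = p"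
begin

lemma v_mult: "x \<noteq> 0 \<Longrightarrow> y \<noteq> 0 \<Longrightarrow> v (x * y) = v x + v y"
  using Lp unfolding Lp_structure_def by blast
lemma v_add: "x \<noteq> 0 \<Longrightarrow> y \<noteq> 0 \<Longrightarrow> x + y \<noteq> 0 \<Longrightarrow> min (v x) (v y) \<le> v (x + y)"
  using Lp unfolding Lp_structure_def by blast
lemma pw_add: "pw (x + y) = pw x * pw y"
  using Lp unfolding Lp_structure_def by blast
lemma pw_1: "pw 1 = of_nat p"
  using Lp unfolding Lp_structure_def by blast
lemma pw_nz: "pw x \<noteq> 0"
  using Lp unfolding Lp_structure_def by blast
lemma v_pw: "v (pw x) = x"
  using Lp unfolding Lp_structure_def by blast
lemma T0: "T 0 = 0"
  using Lp unfolding Lp_structure_def by blast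
lemma T1: "T 1 = 1"
  using Lp unfolding Lp_structure_def by blast
lemma Tmult: "T (a * b) = T a * T b"
  using Lp unfolding Lp_structure_def by blast
lemma vT: "a \<noteq> 0 \<Longrightarrow> v (T a) = 0"
  using Lp unfolding Lp_structure_def by blast
lemma Tadd: "T a + T b \<noteq> T (a + b) \<Longrightarrow> 0 < v (T a + T b - T (a + b))"
  using Lp unfolding Lp_structure_def by blast

lemma p_gt1: "p > 1" using p3 by simp
lemma p_pos: "p > 0" using p3 by simp

lemma Tpow: "T (a ^ k) = T a ^ k"
  by (induction k) (simp_all add: T1 Tmult)

lemma T_nz: "a \<noteq> 0 \<Longrightarrow> T a \<noteq> 0"
proof
  assume "a \<noteq> 0" "T a = 0"
  have "T (a * inverse a) = T a * T (inverse a)" by (rule Tmult)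
  with \<open>a \<noteq> 0\<close> \<open>T a = 0\<close> show False by (simp add: T1)
qed

lemma v1: "v 1 = 0"
  using v_mult[of 1 1] by simp

lemma v_m1: "v (-1) = 0"
  using v_mult[of "-1" "-1"] by (simp add: v1)

lemma v_uminus: "x \<noteq> 0 \<Longrightarrow> v (- x) = v x"
  using v_mult[of "-1" x] by (simp add: v_m1)

lemma v_inverse: "x \<noteq> 0 \<Longrightarrow> v (inverse x) = - v x"
  using v_mult[of x "inverse x"] by (simp add: v1)

definition vge :: "rat \<Rightarrow> 'L \<Rightarrow> bool" where
  "vge r x \<longleftrightarrow> x = 0 \<or> r \<le> v x"

definition vpos :: "'L \<Rightarrow> bool" where
  "vpos x \<longleftrightarrow> x = 0 \<or> 0 < v x"

lemma vge_0 [simp]: "vge r 0" by (simp add: vge_def)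

lemma vge_add: "vge r x \<Longrightarrow> vge r y \<Longrightarrow> vge r (x + y)"
  unfolding vge_def using v_add[of x y] by (cases "x = 0"; cases "y = 0"; cases "x + y = 0") auto

lemma vge_uminus: "vge r x \<Longrightarrow> vge r (- x)"
  unfolding vge_def by (cases "x = 0") (auto simp: v_uminus)

lemma vge_diff: "vge r x \<Longrightarrow> vge r y \<Longrightarrow> vge r (x - y)"
  using vge_add[of r x "- y"] vge_uminus[of r y] by simp

lemma vge_mono: "r \<le> s \<Longrightarrow> vge s x \<Longrightarrow> vge r x"
  unfolding vge_def by auto

lemma vge_mult: "vge r x \<Longrightarrow> vge s y \<Longrightarrow> vge (r + s) (x * y)"
  unfolding vge_def by (cases "x = 0"; cases "y = 0") (auto simp: v_mult)

lemma vge_sum: "(\<And>k. k \<in> S \<Longrightarrow> vge r (f k)) \<Longrightarrow> vge r (\<Sum>k\<in>S. f k)"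
  by (induction S rule: infinite_finite_induct) (auto intro: vge_add)

lemma vge_1: "vge 0 1" by (simp add: vge_def v1)

lemma vge_power: "vge r x \<Longrightarrow> vge (of_nat k * r) (x ^ k)"
proof (induction k)
  case 0 then show ?case using vge_1 by simp
next
  case (Suc k)
  then have "vge (r + of_nat k * r) (x * x ^ k)" by (intro vge_mult) auto
  then show ?case by (simp add: algebra_simps)
qed

lemma vge_power0: "vge 0 x \<Longrightarrow> vge 0 (x ^ k)"
  using vge_power[of 0 x k] by simp

lemma vge_of_nat: "vge 0 (of_nat k)"
proof (induction k)
  case (Suc k) then show ?case using vge_add[OF vge_1 Suc] by (simp add: add.commute)
qed simp

lemma vge_of_int: "vge 0 (of_int k)"
proof (cases "k \<ge> 0")
  case True then have "(of_int k :: 'L) = of_nat (nat k)" by simp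
  then show ?thesis using vge_of_nat by simp
next
  case False then have "(of_int k :: 'L) = - of_nat (nat (- k))" by simp
  then show ?thesis using vge_uminus[OF vge_of_nat] by simp
qed

lemma vge_pw: "vge x (pw x)" by (simp add: vge_def v_pw)

lemma pw_0: "pw 0 = 1"
  using pw_add[of 0 0] pw_nz[of 0] by simp

lemma pw_mult_nat: "pw (of_nat k * x) = pw x ^ k"
  by (induction k) (simp_all add: pw_0 pw_add algebra_simps)

lemma pw_diff: "pw (x - y) = pw x / pw y"
  using pw_add[of "x - y" y] pw_nz[of y] by (simp add: field_simps)

lemma vge_p_mult: "vge r x \<Longrightarrow> vge (r + 1) (of_nat p * x)"
  using vge_mult[OF _ vge_pw[of 1]] by (simp add: pw_1 mult.commute)

lemma vge_of_nat_dvd: assumes "p dvd k" shows "vge 1 (of_nat k)"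
proof -
  from assms obtain j where "k = p * j" by blast
  then show ?thesis using vge_p_mult[OF vge_of_nat[of j]] by simp
qed

lemma vge_of_int_dvd: assumes "int p dvd k" shows "vge 1 (of_int k)"
proof -
  from assms obtain j where "k = int p * j" by blast
  then show ?thesis using vge_p_mult[OF vge_of_int[of j]] by simp
qed

lemma vge_of_int_dvd2: assumes "int p ^ 2 dvd k" shows "vge 2 (of_int k)"
proof -
  from assms obtain j where "k = int p ^ 2 * j" by blast
  then have "of_int k = (of_nat p * (of_nat p * of_int j) :: 'L)" by (simp add: power2_eq_square)
  then show ?thesis using vge_p_mult[OF vge_p_mult[OF vge_of_int[of j]]] by simp
qed

lemma vT0: "vge 0 (T a)"
  by (cases "a = 0") (auto simp: vge_def vT T0)

lemma vTinv: "vge 0 (inverse (T a))"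
  by (cases "a = 0") (auto simp: vge_def vT T0 v_inverse T_nz)

lemma vge_eq: "x = y \<Longrightarrow> vge r (x - y)" by simp

lemma vpos_add: "vpos x \<Longrightarrow> vpos y \<Longrightarrow> vpos (x + y)"
  unfolding vpos_def using v_add[of x y] by (cases "x = 0"; cases "y = 0"; cases "x + y = 0") auto

lemma vpos_uminus: "vpos x \<Longrightarrow> vpos (- x)"
  unfolding vpos_def by (cases "x = 0") (auto simp: v_uminus)

lemma vpos_diff: "vpos x \<Longrightarrow> vpos y \<Longrightarrow> vpos (x - y)"
  using vpos_add[of x "- y"] vpos_uminus[of y] by simp

lemma vpos_mult: "vpos x \<Longrightarrow> vge 0 y \<Longrightarrow> vpos (x * y)"
  unfolding vpos_def vge_def by (cases "x = 0"; cases "y = 0") (auto simp: v_mult)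

lemma vpos_0 [simp]: "vpos 0" by (simp add: vpos_def)

lemma vpos_sum: "(\<And>k. k \<in> S \<Longrightarrow> vpos (f k)) \<Longrightarrow> vpos (\<Sum>k\<in>S. f k)"
proof (induction S rule: infinite_finite_induct)
  case (insert x F) then show ?case by (simp add: vpos_add)
qed simp_all

lemma vpos_vge: "vge r x \<Longrightarrow> 0 < r \<Longrightarrow> vpos x"
  unfolding vpos_def vge_def by auto

lemma strict:
  assumes "a \<noteq> 0" "v a = 0" "vpos b"
  shows "a + b \<noteq> 0 \<and> v (a + b) = 0"
proof (cases "b = 0")
  case True then show ?thesis using assms by simp
next
  case False
  then have vb: "0 < v b" using assms(3) by (simp add: vpos_def)
  have nz: "a + b \<noteq> 0"
  proof
    assume "a + b = 0" then have "b = - a" by (metis add.commute eq_neg_iff_add_eq_0)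
    then show False using vb assms by (simp add: v_uminus)
  qed
  have ge: "0 \<le> v (a + b)" using v_add[OF assms(1) False nz] assms vb by simp
  have "\<not> 0 < v (a + b)"
  proof
    assume pos: "0 < v (a + b)"
    have "min (v (a + b)) (v (- b)) \<le> v (a + b + - b)"
      using False nz assms(1) by (intro v_add) auto
    then show False using pos vb assms by (simp add: v_uminus False)
  qed
  then show ?thesis using nz ge by simp
qed

lemma charp_nat: "(of_nat k :: 'k) = 0 \<longleftrightarrow> p dvd k"
  by (simp add: of_nat_eq_0_iff_char_dvd charp)

lemma T_of_nat_vpos: "vpos (T (of_nat k) - of_nat k)"
proof (induction k)
  case 0 then show ?case by (simp add: T0 vpos_def)
next
  case (Suc k)
  have h: "vpos (T (of_nat k) + T 1 - T (of_nat k + 1))"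
    using Tadd[of "of_nat k" 1] unfolding vpos_def by auto
  have e1: "(of_nat (Suc k)::'k) = of_nat k + 1" by simp
  have e2: "(of_nat (Suc k)::'L) = of_nat k + 1" by simp
  have eq: "T (of_nat (Suc k)) - of_nat (Suc k) = (T (of_nat k) - of_nat k) - (T (of_nat k) + T 1 - T (of_nat k + 1))"
    unfolding e1 e2 by (simp add: T1)
  show ?case unfolding eq by (rule vpos_diff[OF Suc h])
qed

lemma of_nat_unit:
  assumes "\<not> p dvd k"
  shows "(of_nat k :: 'L) \<noteq> 0 \<and> v (of_nat k) = 0"
proof -
  have a: "(of_nat k :: 'k) \<noteq> 0" using assms charp_nat by simp
  have "T (of_nat k) + (of_nat k - T (of_nat k)) \<noteq> 0 \<and> v (T (of_nat k) + (of_nat k - T (of_nat k))) = 0"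
    using strict[OF T_nz[OF a] vT[OF a] vpos_uminus[OF T_of_nat_vpos[of k]]] by simp
  then show ?thesis by simp
qed

lemma v_power: "x \<noteq> 0 \<Longrightarrow> v (x ^ j) = of_nat j * v x"
  by (induction j) (simp_all add: v1 v_mult algebra_simps)

lemma k_frob: "(of_nat m :: 'k) ^ p = of_nat m"
proof -
  have "[m ^ p = m] (mod p)"
  proof (cases "p dvd m")
    case True
    then have "p dvd m ^ p" using p_pos by (metis dvd_power dvd_trans)
    then show ?thesis using True by (simp add: cong_def dvd_eq_mod_eq_0)
  next
    case False
    then have "[m ^ (p - 1) = 1] (mod p)" using fermat_theorem[OF pprime] by simp
    then have "[m * m ^ (p - 1) = m * 1] (mod p)" by (intro cong_mult) auto
    moreover have "m * m ^ (p - 1) = m ^ p" using p_pos by (cases p) auto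
    ultimately show ?thesis by simp
  qed
  then have "(of_nat (m ^ p) :: 'k) = of_nat m" unfolding of_nat_eq_iff_cong_CHAR charp .
  then show ?thesis by simp
qed

lemma k_frob_pow: "(of_nat m :: 'k) ^ (p ^ j) = of_nat m"
proof (induction j)
  case (Suc j)
  have "(of_nat m :: 'k) ^ (p ^ Suc j) = ((of_nat m :: 'k) ^ (p ^ j)) ^ p"
    by (simp add: power_mult[symmetric] mult.commute)
  then show ?case using Suc k_frob by simp
qed simp

lemma k_fermat: assumes "\<not> p dvd m" shows "(of_nat m :: 'k) ^ (p - 1) = 1"
proof -
  have "[m ^ (p - 1) = 1] (mod p)" using fermat_theorem[OF pprime] assms by simp
  then have "(of_nat (m ^ (p - 1)) :: 'k) = of_nat 1" unfolding of_nat_eq_iff_cong_CHAR charp .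
  then show ?thesis by simp
qed

lemma pow_diff_vpos: assumes "vpos (x - t)" "vge 0 x" "vge 0 t" shows "vpos (x ^ a - t ^ a)"
proof -
  have "x ^ a - t ^ a = (x - t) * (\<Sum>i<a. t ^ (a - Suc i) * x ^ i)" by (rule power_diff_sumr2)
  moreover have "vge 0 (\<Sum>i<a. t ^ (a - Suc i) * x ^ i)"
    using assms vge_mult[of 0 _ 0] vge_power0 by (intro vge_sum) simp
  ultimately show ?thesis using vpos_mult assms by simp
qed

lemma teich:
  assumes "\<not> p dvd k"
  shows "vge 1 (T (of_nat k) - of_nat k)"
proof -
  define t where "t = T (of_nat k)"
  define x where "x = (of_nat k :: 'L)"
  have k0: "(of_nat k :: 'k) \<noteq> 0" using assms charp_nat by simp
  have t0: "t \<noteq> 0" "v t = 0" using T_nz[OF k0] vT[OF k0] by (auto simp: t_def)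
  have ht: "t ^ (p - 1) = 1" unfolding t_def using k_fermat[OF assms] by (simp add: Tpow[symmetric] T1)
  have kpos: "k > 0" using assms by (cases k) auto
  have "1 \<le> k ^ (p - 1)" using kpos by simp
  have "[k ^ (p - 1) = 1] (mod p)" using fermat_theorem[OF pprime] assms by simp
  then have dv: "p dvd k ^ (p - 1) - 1" by (rule cong_to_1_nat)
  have "x ^ (p - 1) - 1 = of_nat (k ^ (p - 1) - 1)" unfolding x_def using \<open>1 \<le> k ^ (p - 1)\<close>
    by (simp add: of_nat_diff)
  then have hx: "vge 1 (x ^ (p - 1) - 1)" using vge_of_nat_dvd[OF dv] by simp
  define S where "S = (\<Sum>i<p - 1. x ^ (p - 1 - Suc i) * t ^ i)"
  have fact1: "t ^ (p - 1) - x ^ (p - 1) = (t - x) * S" unfolding S_def by (rule power_diff_sumr2)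
  have vx: "vge 0 x" unfolding x_def by (rule vge_of_nat)
  have vt: "vge 0 t" unfolding t_def by (rule vT0)
  have vxt: "vpos (x - t)" unfolding x_def t_def using vpos_uminus[OF T_of_nat_vpos[of k]] by simp
  have S_eq: "S = of_nat (p - 1) * t ^ (p - 2) + (\<Sum>i<p - 1. (x ^ (p - 1 - Suc i) - t ^ (p - 1 - Suc i)) * t ^ i)"
  proof -
    have "(\<Sum>i<p - 1. (x ^ (p - 1 - Suc i) - t ^ (p - 1 - Suc i)) * t ^ i)
          = S - (\<Sum>i<p - 1. t ^ (p - 1 - Suc i) * t ^ i)"
      unfolding S_def by (simp add: algebra_simps sum_subtractf)
    also have "(\<Sum>i<p - 1. t ^ (p - 1 - Suc i) * t ^ i) = (\<Sum>i<p - 1. t ^ (p - 2))"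
      by (intro sum.cong refl) (simp add: power_add[symmetric])
    also have "\<dots> = of_nat (p - 1) * t ^ (p - 2)" by simp
    finally show ?thesis by simp
  qed
  have vrest: "vpos (\<Sum>i<p - 1. (x ^ (p - 1 - Suc i) - t ^ (p - 1 - Suc i)) * t ^ i)"
  proof -
    have "\<And>i. vpos ((x ^ (p - 1 - Suc i) - t ^ (p - 1 - Suc i)) * t ^ i)"
      using pow_diff_vpos[OF vxt vx vt] vpos_mult vge_power0[OF vt] by blast
    then show ?thesis by (intro vpos_sum)
  qed
  have pu: "\<not> p dvd (p - 1)" using p3 by (auto dest: dvd_imp_le)
  have a0: "of_nat (p - 1) * t ^ (p - 2) \<noteq> 0" "v (of_nat (p - 1) * t ^ (p - 2)) = 0"
    using of_nat_unit[OF pu] t0 by (auto simp: v_mult v_power)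
  from strict[OF a0 vrest] have S0: "S \<noteq> 0" "v S = 0" unfolding S_eq by auto
  show ?thesis
  proof (cases "t = x")
    case True then show ?thesis by (simp add: t_def x_def)
  next
    case False
    have prod: "(t - x) * S = - (x ^ (p - 1) - 1)" using fact1 ht by simp
    have "(t - x) * S \<noteq> 0" using False S0 by simp
    then have q0: "x ^ (p - 1) - 1 \<noteq> 0" unfolding prod by simp
    have "v ((t - x) * S) = v (x ^ (p - 1) - 1)" unfolding prod using v_uminus[OF q0] .
    then have "1 \<le> v ((t - x) * S)" using hx q0 unfolding vge_def by simp
    then have "1 \<le> v (t - x)" using False S0 by (simp add: v_mult)
    then show ?thesis by (simp add: vge_def t_def x_def)
  qed
qed

lemma of_nat_two_ne0: "(2 :: 'L) \<noteq> 0 \<and> v 2 = 0"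
proof -
  have "\<not> p dvd 2" using p3 by (auto dest: dvd_imp_le)
  then show ?thesis using of_nat_unit[of 2] by simp
qed

lemma T_m1: "T (-1) = -1"
proof -
  have "T (-1) ^ 2 = 1" by (simp add: Tpow[symmetric] T1)
  then have c: "T (-1) = 1 \<or> T (-1) = -1" by (simp add: power2_eq_1_iff)
  show ?thesis
  proof (rule ccontr)
    assume "T (-1) \<noteq> -1"
    then have h: "T (-1) = 1" using c by simp
    then have "T (-1) + T 1 \<noteq> T (-1 + 1)" using of_nat_two_ne0 by (simp add: T1 T0)
    then have "0 < v (T (-1) + T 1 - T (-1 + 1))" by (rule Tadd)
    then show False using h of_nat_two_ne0 by (simp add: T1 T0)
  qed
qed

lemma choose_dvd: "j \<in> {1..<p} \<Longrightarrow> p dvd (p choose j)"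
  using dvd_choose_prime[of j p] pprime p_pos by auto

lemma binom_split:
  "(w + x :: 'L) ^ p = x ^ p + w ^ p + (\<Sum>j\<in>{1..<p}. of_nat (p choose j) * w ^ j * x ^ (p - j))"
proof -
  have set: "{..p} = insert 0 (insert p {1..<p})" using p_pos by auto
  have "(w + x) ^ p = (\<Sum>j\<le>p. of_nat (p choose j) * w ^ j * x ^ (p - j))" using binomial_ring[of w x p] .
  also have "\<dots> = x ^ p + w ^ p + (\<Sum>j\<in>{1..<p}. of_nat (p choose j) * w ^ j * x ^ (p - j))"
    unfolding set using p_pos by simp
  finally show ?thesis .
qed

lemma le_nat_mult: "1 \<le> j \<Longrightarrow> (0::rat) \<le> b \<Longrightarrow> of_nat m * b \<le> of_nat j * of_nat m * b"
proof -
  assume "1 \<le> j" "0 \<le> b"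
  then have "1 * (of_nat m * b) \<le> of_nat j * (of_nat m * b)"
    by (intro mult_right_mono) auto
  then show ?thesis by (simp add: mult.assoc)
qed

lemma vge_pow_ge: "vge b w \<Longrightarrow> 0 \<le> b \<Longrightarrow> m \<le> j \<Longrightarrow> vge (of_nat m * b) (w ^ j)"
proof -
  assume a: "vge b w" "0 \<le> b" "m \<le> j"
  then have "of_nat m * b \<le> of_nat j * b" by (intro mult_right_mono) auto
  then show ?thesis using vge_power[OF a(1), of j] by (rule vge_mono)
qed

lemma frob:
  assumes "vge a x" "vge b w" "0 \<le> a" "0 \<le> b"
  shows "vge (1 + b + a) ((w + x) ^ p - x ^ p - w ^ p)"
proof -
  have "vge (1 + b + a) (of_nat (p choose j) * w ^ j * x ^ (p - j))" if j: "j \<in> {1..<p}" for j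
  proof -
    have "vge 1 (of_nat (p choose j))" using choose_dvd[OF j] by (rule vge_of_nat_dvd)
    moreover have "vge b (w ^ j)"
      using vge_pow_ge[OF assms(2) assms(4), of 1 j] j by simp
    moreover have "1 \<le> p - j" using j by auto
    then have "vge a (x ^ (p - j))"
      using vge_pow_ge[OF assms(1) assms(3), of 1 "p - j"] by simp
    ultimately show ?thesis by (intro vge_mult)
  qed
  then have "vge (1 + b + a) (\<Sum>j\<in>{1..<p}. of_nat (p choose j) * w ^ j * x ^ (p - j))"
    by (intro vge_sum)
  then show ?thesis unfolding binom_split by simp
qed

lemma frob_refined:
  assumes "vge 0 x" "vge b w" "0 \<le> b"
  shows "vge (1 + 2 * b) ((w + x) ^ p - x ^ p - w ^ p - of_nat p * x ^ (p - 1) * w)"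
proof -
  have set: "{1..<p} = insert 1 {2..<p}" using p3 by auto
  have "vge (1 + 2 * b) (of_nat (p choose j) * w ^ j * x ^ (p - j))" if j: "j \<in> {2..<p}" for j
  proof -
    have j1: "j \<in> {1..<p}" using j by auto
    have "vge 1 (of_nat (p choose j))" using choose_dvd[OF j1] by (rule vge_of_nat_dvd)
    moreover have "vge (2 * b) (w ^ j)"
      using vge_pow_ge[OF assms(2) assms(3), of 2 j] j by simp
    moreover have "vge 0 (x ^ (p - j))" using vge_power0[OF assms(1)] .
    ultimately have "vge (1 + 2 * b + 0) (of_nat (p choose j) * w ^ j * x ^ (p - j))"
      by (intro vge_mult)
    then show ?thesis by simp
  qed
  then have "vge (1 + 2 * b) (\<Sum>j\<in>{2..<p}. of_nat (p choose j) * w ^ j * x ^ (p - j))" by (intro vge_sum)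
  moreover have "(w + x) ^ p - x ^ p - w ^ p - of_nat p * x ^ (p - 1) * w = (\<Sum>j\<in>{2..<p}. of_nat (p choose j) * w ^ j * x ^ (p - j))"
    unfolding binom_split set by simp
  ultimately show ?thesis by simp
qed

lemma pow_cong:
  assumes "vge 0 a" "vge 0 b" "vge r (a - b)"
  shows "vge r (a ^ k - b ^ k)"
proof -
  have "a ^ k - b ^ k = (a - b) * (\<Sum>i<k. b ^ (k - Suc i) * a ^ i)" by (rule power_diff_sumr2)
  moreover have "vge 0 (\<Sum>i<k. b ^ (k - Suc i) * a ^ i)"
    using assms vge_mult[of 0 _ 0] vge_power0 by (intro vge_sum) simp
  ultimately show ?thesis using vge_mult[OF assms(3)] by fastforce
qed

lemma pow_p_cong:
  assumes "vge r (a - b)" "vge 0 b" "0 \<le> r"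
  shows "vge (min (1 + r) (of_nat p * r)) (a ^ p - b ^ p)"
proof -
  define d where "d = a - b"
  have a: "a = d + b" by (simp add: d_def)
  have "vge (1 + r + 0) ((d + b) ^ p - b ^ p - d ^ p)"
    using frob[OF assms(2), of r d] assms by (simp add: d_def)
  moreover have "vge (of_nat p * r) (d ^ p)" using vge_power assms(1) d_def by blast
  ultimately have "vge (min (1 + r) (of_nat p * r)) (((d + b) ^ p - b ^ p - d ^ p) + d ^ p)"
    using vge_mono[of "min (1 + r) (of_nat p * r)" "1 + r + 0"] vge_mono[of "min (1 + r) (of_nat p * r)" "of_nat p * r"]
    by (intro vge_add) auto
  then show ?thesis unfolding a by simp
qed

lemma frob_sum:
  assumes "finite S" "\<And>k. k \<in> S \<Longrightarrow> vge b (f k)" "0 \<le> b"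
  shows "vge (1 + 2 * b) ((\<Sum>k\<in>S. f k) ^ p - (\<Sum>k\<in>S. f k ^ p))"
  using assms
proof (induction S rule: finite_induct)
  case empty then show ?case using p_pos by (simp add: power_0_left)
next
  case (insert k F)
  have vF: "vge b (\<Sum>k\<in>F. f k)" using insert by (intro vge_sum) auto
  have h1: "vge (1 + b + b) ((f k + (\<Sum>k\<in>F. f k)) ^ p - (\<Sum>k\<in>F. f k) ^ p - f k ^ p)"
    using frob[OF vF insert(4)[of k] insert(5) insert(5)] by simp
  have h2: "vge (1 + 2 * b) ((\<Sum>k\<in>F. f k) ^ p - (\<Sum>k\<in>F. f k ^ p))" using insert by auto
  have "vge (1 + 2 * b) (((f k + (\<Sum>k\<in>F. f k)) ^ p - (\<Sum>k\<in>F. f k) ^ p - f k ^ p) + ((\<Sum>k\<in>F. f k) ^ p - (\<Sum>k\<in>F. f k ^ p)))"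
    using h1 h2 by (intro vge_add) (auto simp: algebra_simps)
  then show ?case using insert by (simp add: algebra_simps)
qed

lemma frob_iter:
  assumes "finite S" "\<And>k. k \<in> S \<Longrightarrow> vge 0 (f k)"
  shows "vge 1 ((\<Sum>k\<in>S. f k) ^ (p ^ j) - (\<Sum>k\<in>S. f k ^ (p ^ j)))"
proof (induction j)
  case 0 then show ?case by simp
next
  case (Suc j)
  define A where "A = (\<Sum>k\<in>S. f k) ^ (p ^ j)"
  define B where "B = (\<Sum>k\<in>S. f k ^ (p ^ j))"
  have vB: "vge 0 B" unfolding B_def using assms vge_power0 by (intro vge_sum) auto
  have h1: "vge (min (1 + 1) (of_nat p * 1)) (A ^ p - B ^ p)"
    using pow_p_cong[of 1 A B] Suc vB by (simp add: A_def B_def)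
  have h1': "vge 1 (A ^ p - B ^ p)" using p3 by (intro vge_mono[OF _ h1]) simp
  have h2: "vge (1 + 2 * 0) (B ^ p - (\<Sum>k\<in>S. (f k ^ (p ^ j)) ^ p))"
    unfolding B_def using assms vge_power0 by (intro frob_sum) auto
  have "vge 1 ((A ^ p - B ^ p) + (B ^ p - (\<Sum>k\<in>S. (f k ^ (p ^ j)) ^ p)))"
    using h1' h2 by (intro vge_add) auto
  moreover have "A ^ p = (\<Sum>k\<in>S. f k) ^ (p ^ Suc j)" unfolding A_def
    by (simp add: power_mult[symmetric] mult.commute)
  moreover have "\<And>k. (f k ^ (p ^ j)) ^ p = f k ^ (p ^ Suc j)"
    by (simp add: power_mult[symmetric] mult.commute)
  ultimately show ?case by simp
qed

lemma frob2_iter: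
  assumes "vge 0 x" "vge 0 w"
  shows "vge 1 ((x + w) ^ (p ^ j) - x ^ (p ^ j) - w ^ (p ^ j))"
proof -
  have "vge 1 ((\<Sum>k\<in>{0::nat, 1}. (if k = 0 then x else w)) ^ (p ^ j) - (\<Sum>k\<in>{0::nat, 1}. (if k = 0 then x else w) ^ (p ^ j)))"
    using assms by (intro frob_iter) auto
  then show ?thesis by (simp add: algebra_simps)
qed

lemma rat_facts:
  "0 < (1::rat) / (of_nat p * (of_nat p - 1))"
  "(1::rat) / (of_nat p - 1) \<le> 1"
  "0 < (1::rat) / (of_nat p - 1)"
  "of_nat p * ((1::rat) / (of_nat p * (of_nat p - 1))) = 1 / (of_nat p - 1)"
proof -
  have a: "(of_nat p :: rat) \<ge> 3" using p3 by simp
  show "0 < (1::rat) / (of_nat p * (of_nat p - 1))" using a by simp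
  show "(1::rat) / (of_nat p - 1) \<le> 1" using a by simp
  show "0 < (1::rat) / (of_nat p - 1)" using a by simp
  show "of_nat p * ((1::rat) / (of_nat p * (of_nat p - 1))) = 1 / (of_nat p - 1)" using a by simp
qed

lemma EXP_int:
  assumes y: "vge (1 / (of_nat p * (of_nat p - 1))) y"
  shows "vge (1 + 1 / (of_nat p - 1))
    ((\<Sum>k<p. of_int (ca p k) * y ^ k) ^ p
     - (of_int (int (fact (p - 1)) ^ p) + of_nat p * of_int (int (fact (p - 1)) ^ p) * y
        + (\<Sum>k\<in>{1..<p}. of_int (ca p k ^ p) * y ^ (k * p))))"
proof -
  define r :: rat where "r = 1 / (of_nat p * (of_nat p - 1))"
  define P :: rat where "P = 1 + 1 / (of_nat p - 1)"
  have r0: "0 < r" unfolding r_def using rat_facts by simp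
  have y0: "vge 0 y" using vge_mono[OF _ y] r0 unfolding r_def by simp
  define G where "G = GG p"
  define K where "K = Polynomial.degree (G ^ p) + p * p"
  define g where "g d = coeff (G ^ p) d" for d
  define Dp where "Dp = int (fact (p - 1)) ^ p"
  obtain HH where HH: "\<And>d. g d = (\<Sum>k<p. if k * p = d then ca p k ^ p else 0) + int p * coeff HH d"
    using GG_high[OF pprime] unfolding g_def G_def by blast
  have ev: "(\<Sum>k<p. of_int (ca p k) * y ^ k) ^ p = (\<Sum>d\<le>K. of_int (g d) * y ^ d)"
  proof -
    have "(\<Sum>k<p. of_int (ca p k) * y ^ k) = poly (of_int_poly G) y"
      unfolding G_def GG_def by (simp add: of_int_poly_hom.hom_sum of_int_hom.map_poly_hom_monom poly_sum poly_monom)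
    then have "(\<Sum>k<p. of_int (ca p k) * y ^ k) ^ p = poly (of_int_poly (G ^ p)) y"
      by (simp add: of_int_poly_hom.hom_power)
    also have "G ^ p = (\<Sum>d\<le>K. Polynomial.monom (g d) d)"
      unfolding g_def K_def by (rule poly_as_sum_of_monoms'[symmetric]) simp
    also have "poly (of_int_poly (\<Sum>d\<le>K. Polynomial.monom (g d) d)) y = (\<Sum>d\<le>K. of_int (g d) * y ^ d)"
      by (simp add: of_int_poly_hom.hom_sum of_int_hom.map_poly_hom_monom poly_sum poly_monom)
    finally show ?thesis .
  qed
  define h where "h d = (if d = 0 then Dp else 0) + (if d = 1 then int p * Dp else 0)
      + (\<Sum>k\<in>{1..<p}. if d = k * p then ca p k ^ p else 0)" for d
  have tgt: "(\<Sum>d\<le>K. of_int (h d) * y ^ d) = of_int Dp + of_nat p * of_int Dp * y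
        + (\<Sum>k\<in>{1..<p}. of_int (ca p k ^ p) * y ^ (k * p))"
  proof -
    have s1: "(\<Sum>d\<le>K. of_int (if d = 0 then Dp else 0) * y ^ d) = of_int Dp"
      by (simp add: if_distrib[of "\<lambda>x. of_int x * _"] sum.delta cong: if_cong)
    have s2: "(\<Sum>d\<le>K. of_int (if d = 1 then int p * Dp else 0) * y ^ d) = of_nat p * of_int Dp * y"
    proof -
      have "1 \<le> p * p" using p3 by simp
      then have "Suc 0 \<le> K" unfolding K_def by linarith
      then show ?thesis by (simp add: if_distrib[of "\<lambda>x. of_int x * _"] sum.delta cong: if_cong)
    qed
    have s3: "(\<Sum>d\<le>K. of_int (\<Sum>k\<in>{1..<p}. if d = k * p then ca p k ^ p else 0) * y ^ d)
        = (\<Sum>k\<in>{1..<p}. of_int (ca p k ^ p) * y ^ (k * p))"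
    proof -
      have "(\<Sum>d\<le>K. of_int (\<Sum>k\<in>{1..<p}. if d = k * p then ca p k ^ p else 0) * y ^ d)
          = (\<Sum>d\<le>K. \<Sum>k\<in>{1..<p}. (if d = k * p then of_int (ca p k ^ p) * y ^ d else 0))"
        by (simp add: of_int_sum sum_distrib_right if_distrib[of "\<lambda>x. of_int x * _"] cong: if_cong)
      also have "\<dots> = (\<Sum>k\<in>{1..<p}. \<Sum>d\<le>K. (if d = k * p then of_int (ca p k ^ p) * y ^ d else 0))"
        by (rule sum.swap)
      also have "\<dots> = (\<Sum>k\<in>{1..<p}. of_int (ca p k ^ p) * y ^ (k * p))"
      proof (intro sum.cong refl)
        fix k assume "k \<in> {1..<p}"
        then have "k * p \<le> K" unfolding K_def by (simp add: trans_le_add2)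
        then show "(\<Sum>d\<le>K. (if d = k * p then of_int (ca p k ^ p) * y ^ d else 0)) = of_int (ca p k ^ p) * y ^ (k * p)"
          by (simp add: sum.delta')
      qed
      finally show ?thesis .
    qed
    show ?thesis unfolding h_def using s1 s2 s3
      by (simp add: distrib_right sum.distrib)
  qed
  have each: "vge P (of_int (g d - h d) * y ^ d)" for d
  proof -
    have hs0: "(\<Sum>k\<in>{1..<p}. if d = k * p then ca p k ^ p else 0) = 0" if "d < p"
      using that by (intro sum.neutral) auto
    have P2: "P \<le> 2" unfolding P_def using rat_facts by simp
    consider "d = 0" | "d = 1" | "2 \<le> d" "d < p" | "p \<le> d" by linarith
    then show ?thesis
    proof cases
      case 1
      then have "g d = h d" using GG_0[of p] p3 hs0 unfolding g_def G_def h_def Dp_def by simp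
      then show ?thesis by simp
    next
      case 2
      then have "g d = h d" using GG_1[of p] p3 hs0 unfolding g_def G_def h_def Dp_def by simp
      then show ?thesis by simp
    next
      case 3
      then have "h d = 0" using hs0 unfolding h_def by simp
      moreover have "int p ^ 2 dvd g d" using GG_mid[OF pprime 3] unfolding g_def G_def .
      ultimately have "vge 2 (of_int (g d - h d))" by (simp add: vge_of_int_dvd2)
      then have "vge (2 + 0) (of_int (g d - h d) * y ^ d)" using vge_power0[OF y0] by (intro vge_mult)
      then show ?thesis using P2 by (intro vge_mono[of P 2]) auto
    next
      case 4
      then have "(\<Sum>k<p. if k * p = d then ca p k ^ p else 0) = (\<Sum>k\<in>{1..<p}. if d = k * p then ca p k ^ p else 0)"
      proof -
        have "{..<p} = insert 0 {1..<p}" using p3 by auto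
        then have "(\<Sum>k<p. if k * p = d then ca p k ^ p else 0) = (\<Sum>k\<in>{1..<p}. if k * p = d then ca p k ^ p else 0)"
          using 4 p3 by simp
        also have "\<dots> = (\<Sum>k\<in>{1..<p}. if d = k * p then ca p k ^ p else 0)"
          by (intro sum.cong) auto
        finally show ?thesis .
      qed
      then have "g d - h d = int p * coeff HH d" using HH[of d] 4 p3 unfolding h_def by simp
      then have a: "vge 1 (of_int (g d - h d))" by (intro vge_of_int_dvd) simp
      have "vge (of_nat d * r) (y ^ d)" using vge_power[OF y[folded r_def]] .
      moreover have "1 / (of_nat p - 1) \<le> of_nat d * r"
      proof -
        have "of_nat p * r \<le> of_nat d * r" using 4 r0 by (intro mult_right_mono) auto
        then show ?thesis using rat_facts(4) unfolding r_def by simp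
      qed
      ultimately have "vge (1 / (of_nat p - 1)) (y ^ d)" by (rule vge_mono[rotated])
      then have "vge (1 + 1 / (of_nat p - 1)) (of_int (g d - h d) * y ^ d)" using a by (intro vge_mult)
      then show ?thesis unfolding P_def .
    qed
  qed
  have "(\<Sum>d\<le>K. of_int (g d) * y ^ d) - (\<Sum>d\<le>K. of_int (h d) * y ^ d) = (\<Sum>d\<le>K. of_int (g d - h d) * y ^ d)"
    by (simp add: sum_subtractf algebra_simps)
  then have "vge P ((\<Sum>d\<le>K. of_int (g d) * y ^ d) - (\<Sum>d\<le>K. of_int (h d) * y ^ d))"
    using each by (simp add: vge_sum)
  then show ?thesis unfolding ev tgt P_def Dp_def .
qed

lemma fact_not_dvd: "k < p \<Longrightarrow> \<not> p dvd fact k"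
  using prime_dvd_fact_iff[OF pprime, of k] by simp

lemma Tf: assumes "k < p"
  shows "T (of_nat (fact k)) \<noteq> 0" "v (T (of_nat (fact k))) = 0"
    "T (of_nat (fact k)) ^ p = T (of_nat (fact k))"
    "vge 1 (T (of_nat (fact k)) - of_nat (fact k))"
proof -
  have a: "(of_nat (fact k) :: 'k) \<noteq> 0" using fact_not_dvd[OF assms] charp_nat by simp
  show "T (of_nat (fact k)) \<noteq> 0" "v (T (of_nat (fact k))) = 0" using T_nz[OF a] vT[OF a] by auto
  show "T (of_nat (fact k)) ^ p = T (of_nat (fact k))" using k_frob by (simp add: Tpow[symmetric])
  show "vge 1 (T (of_nat (fact k)) - of_nat (fact k))" using teich[OF fact_not_dvd[OF assms]] by simp
qed

lemma vge_inv_unit: "x \<noteq> 0 \<Longrightarrow> v x = 0 \<Longrightarrow> vge 0 (inverse x)"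
  by (simp add: vge_def v_inverse)

lemma EXP:
  assumes y: "vge (1 / (of_nat p * (of_nat p - 1))) y"
  shows "vge (1 + 1 / (of_nat p - 1))
    ((\<Sum>k<p. y ^ k / T (of_nat (fact k))) ^ p
     - (1 + of_nat p * y + (\<Sum>k\<in>{1..<p}. y ^ (k * p) / T (of_nat (fact k)))))"
proof -
  define P :: rat where "P = 1 + 1 / (of_nat p - 1)"
  define r :: rat where "r = 1 / (of_nat p * (of_nat p - 1))"
  have r0: "0 < r" unfolding r_def using rat_facts by simp
  have P2: "P \<le> 2" unfolding P_def using rat_facts by simp
  have y0: "vge 0 y" using vge_mono[OF _ y] r0 unfolding r_def by simp
  define D where "D = (of_nat (fact (p - 1)) :: 'L)"
  have Du: "D \<noteq> 0" "v D = 0" using of_nat_unit[OF fact_not_dvd[of "p - 1"]] p_pos unfolding D_def by auto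
  define Tf where "Tf k = T (of_nat (fact k))" for k
  define E where "E = (\<Sum>k<p. y ^ k / Tf k)"
  define F where "F = (\<Sum>k<p. of_int (ca p k) * y ^ k :: 'L)"
  define TE where "TE = 1 + of_nat p * y + (\<Sum>k\<in>{1..<p}. y ^ (k * p) / Tf k)"
  define TF where "TF = of_int (int (fact (p - 1)) ^ p) + of_nat p * of_int (int (fact (p - 1)) ^ p) * y
        + (\<Sum>k\<in>{1..<p}. of_int (ca p k ^ p) * y ^ (k * p) :: 'L)"
  have caD: "of_int (ca p k) * of_nat (fact k) = D" if "k < p" for k
  proof -
    have "of_int (ca p k * int (fact k)) = (of_int (int (fact (p - 1))) :: 'L)" using ca_fact[OF that] by simp
    then show ?thesis unfolding D_def of_int_mult of_int_of_nat_eq .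
  qed
  have A: "vge 1 (D * E - F)"
  proof -
    have "D * E - F = (\<Sum>k<p. y ^ k * of_int (ca p k) * ((of_nat (fact k) - Tf k) * inverse (Tf k)))"
      unfolding E_def F_def sum_distrib_left sum_subtractf[symmetric]
    proof (intro sum.cong refl)
      fix k assume "k \<in> {..<p}"
      then have k: "k < p" by simp
      have t0: "Tf k \<noteq> 0" using Tf(1)[OF k] unfolding Tf_def .
      show "D * (y ^ k / Tf k) - of_int (ca p k) * y ^ k = y ^ k * of_int (ca p k) * ((of_nat (fact k) - Tf k) * inverse (Tf k))"
        using t0 caD[OF k, symmetric] by (simp add: field_simps)
    qed
    moreover have "vge 1 (y ^ k * of_int (ca p k) * ((of_nat (fact k) - Tf k) * inverse (Tf k)))" if "k \<in> {..<p}" for k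
    proof -
      have k: "k < p" using that by simp
      have "vge 1 (of_nat (fact k) - Tf k)" using vge_uminus[OF Tf(4)[OF k]] unfolding Tf_def by simp
      then have "vge (1 + 0) ((of_nat (fact k) - Tf k) * inverse (Tf k))" using vTinv unfolding Tf_def by (intro vge_mult)
      then have "vge (0 + 0 + 1) (y ^ k * of_int (ca p k) * ((of_nat (fact k) - Tf k) * inverse (Tf k)))"
        using vge_power0[OF y0] vge_of_int by (intro vge_mult) auto
      then show ?thesis by simp
    qed
    ultimately show ?thesis by (auto intro!: vge_sum)
  qed
  have vF: "vge 0 F" unfolding F_def using vge_power0[OF y0] vge_of_int vge_mult[of 0 _ 0] by (intro vge_sum) simp
  have B: "vge P ((D * E) ^ p - F ^ p)"
  proof -
    have "vge (min (1 + 1) (of_nat p * 1)) ((D * E) ^ p - F ^ p)" using pow_p_cong[OF A vF] by simp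
    moreover have "P \<le> min (1 + 1) (of_nat p * 1)" using P2 p3 by simp
    ultimately show ?thesis by (intro vge_mono[of P]) auto
  qed
  have C: "vge P (F ^ p - TF)" unfolding F_def TF_def P_def using EXP_int[OF y] .
  have Fp: "vge P (TF - D ^ p * TE)"
  proof -
    have Dp: "(of_int (int (fact (p - 1)) ^ p) :: 'L) = D ^ p" unfolding D_def of_int_power of_int_of_nat_eq ..
    have "TF - D ^ p * TE = (\<Sum>k\<in>{1..<p}. y ^ (k * p) * (of_int (ca p k) ^ p - D ^ p / Tf k))"
      unfolding TF_def TE_def Dp by (simp add: algebra_simps sum_distrib_left sum_subtractf)
    moreover have "vge P (y ^ (k * p) * (of_int (ca p k) ^ p - D ^ p / Tf k))" if "k \<in> {1..<p}" for k
    proof -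
      have k: "k < p" "1 \<le> k" using that by auto
      have t0: "Tf k \<noteq> 0" "v (Tf k) = 0" "Tf k ^ p = Tf k" using Tf[OF k(1)] unfolding Tf_def by auto
      have e: "of_int (ca p k) ^ p - D ^ p / Tf k = of_int (ca p k) ^ p * ((Tf k ^ p - of_nat (fact k) ^ p) * inverse (Tf k))"
        using t0 caD[OF k(1), symmetric] by (simp add: field_simps power_mult_distrib)
      have "vge 1 (Tf k ^ p - of_nat (fact k) ^ p)"
        using pow_cong[OF vT0 vge_of_nat Tf(4)[OF k(1)]] unfolding Tf_def .
      then have "vge (0 + (1 + 0)) (of_int (ca p k) ^ p * ((Tf k ^ p - of_nat (fact k) ^ p) * inverse (Tf k)))"
        using vge_power0[OF vge_of_int] vge_inv_unit[OF t0(1,2)] by (intro vge_mult) auto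
      then have a: "vge 1 (of_int (ca p k) ^ p - D ^ p / Tf k)" unfolding e by simp
      have "vge (of_nat (k * p) * r) (y ^ (k * p))" using vge_power[OF y[folded r_def]] .
      moreover have "1 / (of_nat p - 1) \<le> of_nat (k * p) * r"
      proof -
        have "of_nat p * r \<le> of_nat (k * p) * r" using k r0 by (intro mult_right_mono) auto
        then show ?thesis using rat_facts(4) unfolding r_def by simp
      qed
      ultimately have "vge (1 / (of_nat p - 1)) (y ^ (k * p))" by (rule vge_mono[rotated])
      then have "vge (1 / (of_nat p - 1) + 1) (y ^ (k * p) * (of_int (ca p k) ^ p - D ^ p / Tf k))"
        using a by (intro vge_mult)
      then show ?thesis unfolding P_def by (simp add: add.commute)
    qed
    ultimately show ?thesis by (auto intro!: vge_sum)
  qed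
  have "vge P (((D * E) ^ p - F ^ p) + (F ^ p - TF) + (TF - D ^ p * TE))"
    using B C Fp by (intro vge_add)
  then have "vge P (D ^ p * (E ^ p - TE))" by (simp add: algebra_simps power_mult_distrib)
  then have "vge (0 + P) (inverse (D ^ p) * (D ^ p * (E ^ p - TE)))"
    using vge_inv_unit[of "D ^ p"] Du by (intro vge_mult) (auto simp: v_power)
  moreover have "inverse (D ^ p) * (D ^ p * (E ^ p - TE)) = E ^ p - TE"
    using Du by (simp add: mult.assoc[symmetric])
  ultimately have "vge P (E ^ p - TE)" by simp
  then show ?thesis unfolding E_def TE_def Tf_def P_def .
qed

lemma p_odd: "odd p" using prime_odd_nat[OF pprime] p3 by simp

lemma m1_pow_odd: "odd m \<Longrightarrow> ((-1::'L) ^ a) ^ m = (-1) ^ a"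
  by (simp add: power_mult[symmetric] mult.commute[of a] power_mult)

lemma vge_m1pow: "vge 0 ((-1::'L) ^ a)"
proof -
  have "vge 0 (-1::'L)" using vge_uminus[OF vge_1] .
  then show ?thesis by (rule vge_power0)
qed

lemma vge_pw0: "0 \<le> x \<Longrightarrow> vge 0 (pw x)"
  using vge_mono[OF _ vge_pw] by simp

lemma telescope:
  fixes J :: nat and f :: "nat \<Rightarrow> 'L"
  assumes "1 \<le> J"
  shows "(\<Sum>j\<in>{2..J}. f j - f (j - 1)) = f J - f 1"
  using assms
proof (induction J rule: dec_induct)
  case base then show ?case by simp
next
  case (step J)
  have "{2..Suc J} = insert (Suc J) {2..J}" using step by auto
  then show ?case using step by simp
qed

end

locale lps2 = lps p T v pw
  for p :: nat and T :: "'k::field \<Rightarrow> 'L::field" and v :: "'L \<Rightarrow> rat" and pw :: "rat \<Rightarrow> 'L" +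
  fixes \<zeta> :: 'k and n :: nat
  assumes n2: "n \<ge> 2" and zp: "\<zeta> ^ (p - 1) = -1"
begin

definition "M = p ^ (n - 2)"
definition "z = T \<zeta>"
definition "r = (1::rat) / (of_nat p * (of_nat p - 1))"
definition "y = z * pw r"
definition "u k = y ^ k / T (of_nat (fact k))" for k
definition "tt k = (-1) ^ (k * n) / T (of_nat (fact k)) * T \<zeta> ^ k * pw (of_nat k / (of_nat p ^ (n - 1) * (of_nat p - 1)))" for k
definition "ss l = (-1) ^ n * T \<zeta> * pw (1 / (of_nat p ^ (n - 2) * (of_nat p - 1)) - 1 / of_nat p ^ l)" for l
definition "w j = pw (1 / (of_nat p - 1) - 1 / of_nat p ^ j)" for j

lemma zeta_nz: "\<zeta> \<noteq> 0"
proof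
  assume "\<zeta> = 0"
  then have "\<zeta> ^ (p - 1) = 0" using p3 by (simp add: power_0_left)
  then have "(-1::'k) = 0" unfolding zp .
  then show False by simp
qed

lemma zeta_p: "\<zeta> ^ p = - \<zeta>"
proof -
  have "\<zeta> ^ p = \<zeta> ^ (p - 1) * \<zeta>" using p_pos by (simp add: power_Suc2[symmetric])
  then show ?thesis using zp by simp
qed

lemma z_p: "z ^ p = - z"
  unfolding z_def using zeta_p T_m1 by (simp add: Tpow[symmetric] Tmult[of "-1" \<zeta>, simplified])

lemma zeta_pow: "\<zeta> ^ (p ^ j) = (-1) ^ j * \<zeta>"
proof (induction j)
  case (Suc j)
  have "\<zeta> ^ (p ^ Suc j) = (\<zeta> ^ (p ^ j)) ^ p" by (simp add: power_mult[symmetric] mult.commute)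
  also have "\<dots> = ((-1) ^ j) ^ p * \<zeta> ^ p" using Suc by (simp add: power_mult_distrib)
  also have "((-1::'k) ^ j) ^ p = (-1) ^ j"
    using p_odd by (simp add: power_mult[symmetric] mult.commute[of j] power_mult)
  finally show ?case using zeta_p by simp
qed simp

lemma M_odd: "odd M" unfolding M_def using p_odd by simp
lemma M_pos: "M > 0" unfolding M_def using p_pos by simp

lemma zM: "z ^ M = (-1) ^ n * z"
proof -
  have nn: "n = (n - 2) + 2" using n2 by simp
  have "(-1::'k) ^ n = (-1) ^ (n - 2) * (-1) ^ 2" by (subst nn) (simp only: power_add)
  then have "(-1::'k) ^ n = (-1) ^ (n - 2)" by simp
  then have "\<zeta> ^ M = (-1) ^ n * \<zeta>" unfolding M_def zeta_pow by simp
  then have "z ^ M = T ((-1) ^ n) * z" unfolding z_def by (simp add: Tpow[symmetric] Tmult)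
  then show ?thesis by (simp add: Tpow T_m1)
qed

lemma vz: "vge 0 z" unfolding z_def by (rule vT0)

lemma r_pos: "0 < r" unfolding r_def using rat_facts by simp

lemma r_le1: "r \<le> 1"
proof -
  have q: "(3::rat) \<le> of_nat p" using p3 by simp
  have "(3::rat) * 2 \<le> of_nat p * (of_nat p - 1)" using q by (intro mult_mono) auto
  then have "1 \<le> (of_nat p :: rat) * (of_nat p - 1)" by simp
  then show ?thesis unfolding r_def by simp
qed

lemma vy: "vge r y"
  unfolding y_def using vge_mult[OF vz vge_pw[of r]] by simp

lemma vy0: "vge 0 y" using vge_mono[OF _ vy] r_pos by simp

lemma n1: "n - 1 = Suc (n - 2)" using n2 by simp

lemma N_eq: "p ^ (n - 1) = M * p"
  unfolding M_def n1 by simp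

lemma N_eq_rat: "(of_nat p :: rat) ^ (n - 1) = of_nat p ^ (n - 2) * of_nat p"
  unfolding n1 by simp

lemma tt_M: assumes "k < p" shows "tt k ^ M = u k"
proof -
  have TfM: "T (of_nat (fact k)) ^ M = T (of_nat (fact k))"
    unfolding M_def by (simp add: Tpow[symmetric] k_frob_pow)
  have pwM: "pw (of_nat k / (of_nat p ^ (n - 1) * (of_nat p - 1))) ^ M = pw r ^ k"
  proof -
    have "of_nat M * (of_nat k / (of_nat p ^ (n - 1) * (of_nat p - 1))) = of_nat k * r"
      unfolding r_def N_eq_rat M_def using p3 by (simp add: field_simps)
    then show ?thesis by (metis pw_mult_nat)
  qed
  have "tt k ^ M = ((-1) ^ (k * n)) ^ M / T (of_nat (fact k)) ^ M * (z ^ M) ^ k * pw (of_nat k / (of_nat p ^ (n - 1) * (of_nat p - 1))) ^ M"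
    unfolding tt_def z_def by (simp add: power_mult_distrib power_divide power_mult[symmetric] mult.commute)
  also have "\<dots> = (-1) ^ (k * n) / T (of_nat (fact k)) * ((-1) ^ n * z) ^ k * pw r ^ k"
    using m1_pow_odd[OF M_odd] TfM pwM zM by simp
  also have "\<dots> = ((-1) ^ (k * n) * (-1) ^ (n * k)) / T (of_nat (fact k)) * z ^ k * pw r ^ k"
    by (simp add: power_mult_distrib power_mult)
  also have "(-1::'L) ^ (k * n) * (-1) ^ (n * k) = 1"
    by (simp add: mult.commute[of n k] power_add[symmetric])
  finally show ?thesis unfolding u_def y_def by (simp add: power_mult_distrib)
qed

lemma ss_M: assumes "n \<le> l" shows "ss l ^ M = z * w (l + 2 - n)"
proof -
  have e: "of_nat M * (1 / (of_nat p ^ (n - 2) * (of_nat p - 1)) - 1 / of_nat p ^ l)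
      = 1 / (of_nat p - 1) - 1 / (of_nat p :: rat) ^ (l + 2 - n)"
  proof -
    have l: "l = (n - 2) + (l + 2 - n)" using assms n2 by simp
    have "(of_nat p :: rat) ^ l = of_nat p ^ (n - 2) * of_nat p ^ (l + 2 - n)"
      by (subst l) (simp add: power_add)
    then show ?thesis unfolding M_def using p3 by (simp add: field_simps)
  qed
  have "ss l ^ M = ((-1) ^ n) ^ M * z ^ M * pw (1 / (of_nat p ^ (n - 2) * (of_nat p - 1)) - 1 / of_nat p ^ l) ^ M"
    unfolding ss_def z_def by (simp add: power_mult_distrib)
  also have "\<dots> = (-1) ^ n * ((-1) ^ n * z) * w (l + 2 - n)"
    unfolding w_def using m1_pow_odd[OF M_odd] zM pw_mult_nat[symmetric] e by simp
  also have "\<dots> = ((-1) ^ n * (-1) ^ n) * z * w (l + 2 - n)" by simp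
  also have "(-1::'L) ^ n * (-1) ^ n = 1" by (simp add: power_add[symmetric])
  finally show ?thesis by simp
qed

lemma vtt: "vge 0 (tt k)"
proof -
  have "0 \<le> (of_nat k :: rat) / (of_nat p ^ (n - 1) * (of_nat p - 1))" using p3 by simp
  then have "vge (0 + 0 + 0 + 0) ((-1) ^ (k * n) * inverse (T (of_nat (fact k))) * T \<zeta> ^ k * pw (of_nat k / (of_nat p ^ (n - 1) * (of_nat p - 1))))"
    using vge_m1pow vTinv vge_power0[OF vT0] vge_pw0 by (intro vge_mult) auto
  then show ?thesis unfolding tt_def by (simp add: divide_inverse)
qed

lemma vss: assumes "n \<le> l" shows "vge 0 (ss l)"
proof -
  have a: "(of_nat p :: rat) ^ (n - 2) * (of_nat p - 1) \<le> of_nat p ^ l"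
  proof -
    have "(of_nat p :: rat) ^ (n - 2) * (of_nat p - 1) \<le> of_nat p ^ (n - 2) * of_nat p" by (intro mult_left_mono) auto
    also have "\<dots> = of_nat p ^ (Suc (n - 2))" by simp
    also have "\<dots> \<le> of_nat p ^ l" using assms n2 p3 by (intro power_increasing) auto
    finally show ?thesis .
  qed
  have "0 \<le> 1 / ((of_nat p :: rat) ^ (n - 2) * (of_nat p - 1)) - 1 / of_nat p ^ l"
    using a p3 by (simp add: frac_le)
  then have "vge (0 + 0 + 0) ((-1) ^ n * T \<zeta> * pw (1 / (of_nat p ^ (n - 2) * (of_nat p - 1)) - 1 / of_nat p ^ l))"
    using vge_m1pow vT0 vge_pw0 by (intro vge_mult) auto
  then show ?thesis unfolding ss_def by simp
qed

lemma Lambda_eq: "Lambda p T pw \<zeta> i n = (\<Sum>k=0..min i (p - 1). tt k) + (if p \<le> i then (\<Sum>l=n..i - p + n. ss l) else 0)"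
  unfolding Lambda_def tt_def ss_def by simp

definition "Wt i = (if p \<le> i then (\<Sum>l=n..i - p + n. z * w (l + 2 - n)) else 0)" for i
definition "Yt i = (\<Sum>k=0..min i (p - 1). u k) + Wt i" for i

lemma vu0: "k < p \<Longrightarrow> vge 0 (u k)"
  using vge_power0[OF vtt] tt_M by metis

lemma vzw: "n \<le> l \<Longrightarrow> vge 0 (z * w (l + 2 - n))"
  using vge_power0[OF vss] ss_M by metis

lemma vYt: "vge 0 (Yt i)"
proof -
  have a: "vge 0 (\<Sum>k=0..min i (p - 1). u k)" using p_pos by (intro vge_sum vu0) auto
  have h: "vge 0 (\<Sum>l=n..i - p + n. z * w (l + 2 - n))" by (rule vge_sum, rule vzw) simp
  have b: "vge 0 (Wt i)"
  proof (cases "p \<le> i")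
    case True then show ?thesis unfolding Wt_def using h by (simp only: if_True)
  next
    case False then show ?thesis unfolding Wt_def by simp
  qed
  show ?thesis unfolding Yt_def using vge_add[OF a b] .
qed

lemma LamM: "vge 1 (Lambda p T pw \<zeta> i n ^ M - Yt i)"
proof -
  define A where "A = (\<Sum>k=0..min i (p - 1). tt k)"
  define B where "B = (if p \<le> i then (\<Sum>l=n..i - p + n. ss l) else 0)"
  have vA: "vge 0 A" unfolding A_def by (intro vge_sum vtt)
  have vB: "vge 0 B" unfolding B_def by (auto intro!: vge_sum vss)
  have h1: "vge 1 ((A + B) ^ M - A ^ M - B ^ M)" unfolding M_def by (rule frob2_iter[OF vA vB])
  have h2: "vge 1 (A ^ M - (\<Sum>k=0..min i (p - 1). u k))"
  proof -
    have "vge 1 (A ^ M - (\<Sum>k=0..min i (p - 1). tt k ^ M))" unfolding A_def M_def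
      by (intro frob_iter) (auto intro: vtt)
    moreover have "(\<Sum>k=0..min i (p - 1). tt k ^ M) = (\<Sum>k=0..min i (p - 1). u k)"
      using p_pos by (intro sum.cong refl tt_M) auto
    ultimately show ?thesis by simp
  qed
  have h3: "vge 1 (B ^ M - Wt i)"
  proof (cases "p \<le> i")
    case True
    have "B = (\<Sum>l=n..i - p + n. ss l)" using True B_def by simp
    then have "vge 1 (B ^ M - (\<Sum>l=n..i - p + n. ss l ^ M))" unfolding M_def
      by (simp only:) (intro frob_iter, auto intro: vss)
    moreover have "(\<Sum>l=n..i - p + n. ss l ^ M) = (\<Sum>l=n..i - p + n. z * w (l + 2 - n))"
      by (intro sum.cong refl ss_M) auto
    ultimately show ?thesis unfolding Wt_def using True by simp
  next
    case False then show ?thesis unfolding B_def Wt_def using M_pos by (simp add: power_0_left)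
  qed
  have "vge 1 (((A + B) ^ M - A ^ M - B ^ M) + (A ^ M - (\<Sum>k=0..min i (p - 1). u k)) + (B ^ M - Wt i))"
    using h1 h2 h3 by (intro vge_add)
  then show ?thesis unfolding Lambda_eq Yt_def A_def[symmetric] B_def[symmetric] by (simp add: algebra_simps)
qed

lemma LamN: "vge 2 (Lambda p T pw \<zeta> i n ^ (p ^ (n - 1)) - Yt i ^ p)"
proof -
  have "vge (min (1 + 1) (of_nat p * 1)) ((Lambda p T pw \<zeta> i n ^ M) ^ p - Yt i ^ p)"
    using pow_p_cong[OF LamM vYt] by simp
  moreover have "min (1 + 1) (of_nat p * 1 :: rat) = 2" using p3 by simp
  moreover have "(Lambda p T pw \<zeta> i n ^ M) ^ p = Lambda p T pw \<zeta> i n ^ (p ^ (n - 1))"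
    unfolding N_eq by (simp add: power_mult)
  ultimately show ?thesis by simp
qed

lemma u_0: "u 0 = 1" unfolding u_def by (simp add: T1)

lemma vu: "1 \<le> k \<Longrightarrow> vge r (u k)"
proof -
  assume k: "1 \<le> k"
  have "vge r (y ^ k)" using vge_pow_ge[OF vy _ k] r_pos by simp
  then have "vge (r + 0) (y ^ k * inverse (T (of_nat (fact k))))" using vTinv by (intro vge_mult)
  then show ?thesis unfolding u_def by (simp add: divide_inverse)
qed

lemma u_p: assumes "k < p"
  shows "u k ^ p = y ^ (k * p) / T (of_nat (fact k))"
    "y ^ (k * p) / T (of_nat (fact k)) = (-1) ^ k / T (of_nat (fact k)) * T \<zeta> ^ k * pw (of_nat k / (of_nat p - 1))"
proof -
  show "u k ^ p = y ^ (k * p) / T (of_nat (fact k))"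
    unfolding u_def using Tf(3)[OF assms] by (simp add: power_divide power_mult)
  have "of_nat (k * p) * r = of_nat k / (of_nat p - 1)" unfolding r_def using p3 by (simp add: field_simps)
  then have "pw r ^ (k * p) = pw (of_nat k / (of_nat p - 1))" by (metis pw_mult_nat)
  moreover have "z ^ (k * p) = (-1) ^ k * z ^ k"
  proof -
    have "z ^ (k * p) = (z ^ p) ^ k" by (simp add: mult.commute[of k p] power_mult)
    also have "\<dots> = (- z) ^ k" using z_p by simp
    also have "\<dots> = (-1) ^ k * z ^ k" by (rule power_minus)
    finally show ?thesis .
  qed
  ultimately have "y ^ (k * p) = (-1) ^ k * z ^ k * pw (of_nat k / (of_nat p - 1))"
    unfolding y_def by (simp add: power_mult_distrib)
  then show "y ^ (k * p) / T (of_nat (fact k)) = (-1) ^ k / T (of_nat (fact k)) * T \<zeta> ^ k * pw (of_nat k / (of_nat p - 1))"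
    unfolding z_def by simp
qed

lemma bigO_of_vge: "vge c (a - b) \<Longrightarrow> bigO_eq v a b c"
  unfolding bigO_eq_def vge_def by auto

lemma part1:
  assumes i: "1 \<le> i" "i < p - 1"
  shows "bigO_eq v (Lambda p T pw \<zeta> i n ^ (p ^ (n - 1)) - 1)
          (\<Sum>l = 1..i. (-1) ^ l / T (of_nat (fact l)) * T \<zeta> ^ l * pw (of_nat l / (of_nat p - 1)))
          (1 + 1 / (of_nat p * (of_nat p - 1)))"
proof -
  define S where "S = (\<Sum>k=1..i. u k)"
  have Y: "Yt i = 1 + S" unfolding Yt_def Wt_def S_def using i
    by (simp add: sum.atLeast_Suc_atMost u_0)
  have vS: "vge r S" unfolding S_def by (intro vge_sum vu) auto
  have a: "vge (1 + 0 + r) ((1 + S) ^ p - S ^ p - 1 ^ p)" using frob[OF vS vge_1] r_pos by simp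
  have b: "vge (1 + 2 * r) (S ^ p - (\<Sum>k=1..i. u k ^ p))" unfolding S_def using r_pos
    by (intro frob_sum) (auto intro: vu)
  have c: "vge (1 + r) (Lambda p T pw \<zeta> i n ^ (p ^ (n - 1)) - Yt i ^ p)"
    using r_le1 by (intro vge_mono[OF _ LamN]) auto
  have a': "vge (1 + r) ((1 + S) ^ p - S ^ p - 1 ^ p)" using a by simp
  have b': "vge (1 + r) (S ^ p - (\<Sum>k=1..i. u k ^ p))" using r_pos by (intro vge_mono[OF _ b]) simp
  have "vge (1 + r) ((Lambda p T pw \<zeta> i n ^ (p ^ (n - 1)) - Yt i ^ p) + ((1 + S) ^ p - S ^ p - 1 ^ p) + (S ^ p - (\<Sum>k=1..i. u k ^ p)))"
    using a' b' c by (intro vge_add)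
  moreover have eq2: "(\<Sum>k=1..i. u k ^ p) = (\<Sum>l = 1..i. (-1) ^ l / T (of_nat (fact l)) * T \<zeta> ^ l * pw (of_nat l / (of_nat p - 1)))"
  proof (intro sum.cong refl)
    fix l assume "l \<in> {1..i}"
    then have lp: "l < p" using i by auto
    show "u l ^ p = (-1) ^ l / T (of_nat (fact l)) * T \<zeta> ^ l * pw (of_nat l / (of_nat p - 1))"
      by (simp only: u_p[OF lp])
  qed
  moreover have eq1: "(Lambda p T pw \<zeta> i n ^ (p ^ (n - 1)) - Yt i ^ p) + ((1 + S) ^ p - S ^ p - 1 ^ p) + (S ^ p - (\<Sum>k=1..i. u k ^ p))
     = (Lambda p T pw \<zeta> i n ^ (p ^ (n - 1)) - 1) - (\<Sum>k=1..i. u k ^ p)"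
    unfolding Y power_one by (simp add: algebra_simps)
  ultimately have "vge (1 + r) ((Lambda p T pw \<zeta> i n ^ (p ^ (n - 1)) - 1) - (\<Sum>l = 1..i. (-1) ^ l / T (of_nat (fact l)) * T \<zeta> ^ l * pw (of_nat l / (of_nat p - 1))))"
    by (simp only: eq1 eq2)
  then show ?thesis unfolding r_def by (rule bigO_of_vge)
qed

definition "vmin = 1 / (of_nat p - 1) - 1 / (of_nat p :: rat) ^ 2"

lemma rat2:
  shows "0 \<le> vmin"
    "\<And>j. 2 \<le> j \<Longrightarrow> vmin \<le> 1 / (of_nat p - 1) - 1 / (of_nat p :: rat) ^ j"
    "1 + 1 / (of_nat p - 1) \<le> 1 + 2 * vmin"
    "1 + 1 / (of_nat p - 1) \<le> r + 1 + vmin"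
    "\<And>j. 1 \<le> j \<Longrightarrow> of_nat p * (1 / (of_nat p - 1) - 1 / (of_nat p :: rat) ^ j) = 1 + 1 / (of_nat p - 1) - 1 / of_nat p ^ (j - 1)"
    "1 + r = 1 + 1 / (of_nat p - 1) - 1 / (of_nat p :: rat)"
    "1 + (1 / (of_nat p - 1) - 1 / (of_nat p :: rat) ^ j) = 1 + 1 / (of_nat p - 1) - 1 / of_nat p ^ j"
proof -
  define q where "q = (of_nat p :: rat)"
  have q3: "3 \<le> q" unfolding q_def using p3 by simp
  have q1: "q - 1 \<le> q ^ 2"
  proof -
    have "q * 1 \<le> q * q" using q3 by (intro mult_left_mono) auto
    then show ?thesis by (simp add: power2_eq_square)
  qed
  show "0 \<le> vmin" unfolding vmin_def q_def[symmetric] using q1 q3 by (intro diff_ge_0_iff_ge[THEN iffD2] frac_le) auto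
  show "vmin \<le> 1 / (of_nat p - 1) - 1 / (of_nat p :: rat) ^ j" if "2 \<le> j" for j
  proof -
    have "q ^ 2 \<le> q ^ j" using that q3 by (intro power_increasing) auto
    then have "1 / q ^ j \<le> 1 / q ^ 2" using q3 by (intro frac_le) auto
    then show ?thesis unfolding vmin_def q_def[symmetric] by simp
  qed
  have a: "2 * (q - 1) \<le> q ^ 2"
  proof -
    have "0 \<le> (q - 1) ^ 2" by simp
    then show ?thesis by (simp add: power2_eq_square algebra_simps)
  qed
  have "2 / q ^ 2 \<le> 1 / (q - 1)" using a q3 by (simp add: field_simps)
  then show "1 + 1 / (of_nat p - 1) \<le> 1 + 2 * vmin" unfolding vmin_def q_def[symmetric] by simp
  have "1 / q ^ 2 \<le> 1 / (q * (q - 1))" using q3 by (intro frac_le) (auto simp: power2_eq_square)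
  then show "1 + 1 / (of_nat p - 1) \<le> r + 1 + vmin" unfolding vmin_def r_def q_def[symmetric] by simp
  show "of_nat p * (1 / (of_nat p - 1) - 1 / (of_nat p :: rat) ^ j) = 1 + 1 / (of_nat p - 1) - 1 / of_nat p ^ (j - 1)" if "1 \<le> j" for j
  proof -
    have "q ^ j = q * q ^ (j - 1)" using that by (cases j) auto
    then show ?thesis unfolding q_def[symmetric] using q3 by (simp add: field_simps)
  qed
  show "1 + r = 1 + 1 / (of_nat p - 1) - 1 / (of_nat p :: rat)" unfolding r_def q_def[symmetric] using q3 by (simp add: field_simps)
  show "1 + (1 / (of_nat p - 1) - 1 / (of_nat p :: rat) ^ j) = 1 + 1 / (of_nat p - 1) - 1 / of_nat p ^ j" by simp
qed

lemma ring_id: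
  fixes A B F G H K Lx M :: 'L
  shows "A - (1 + B + (K + Lx + M)) = (A - F - G - H) + (H - K) + (G - Lx) + (F - (1 + M + B))"
  by (simp add: algebra_simps)

lemma part2:
  assumes i: "p - 1 \<le> i"
  shows "bigO_eq v (Lambda p T pw \<zeta> i n ^ (p ^ (n - 1)) - 1)
          ((\<Sum>l = 1..p - 1. (-1) ^ l / T (of_nat (fact l)) * T \<zeta> ^ l * pw (of_nat l / (of_nat p - 1)))
           + T \<zeta> * pw (1 + 1 / (of_nat p - 1) - 1 / of_nat p ^ (i + 2 - p)))
          (1 + 1 / (of_nat p - 1))"
proof -
  define P :: rat where "P = 1 + 1 / (of_nat p - 1)"
  define J where "J = i + 2 - p"
  have J1: "1 \<le> J" unfolding J_def using i by simp
  define E where "E = (\<Sum>k<p. u k)"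
  define W where "W = (\<Sum>j\<in>{2..J}. z * w j)"
  have hE: "(\<Sum>k=0..min i (p - 1). u k) = E"
  proof -
    have "min i (p - 1) = p - 1" using i by simp
    moreover have "{0..p - 1} = {..<p}" using p_pos by auto
    ultimately show ?thesis unfolding E_def by simp
  qed
  have hW: "Wt i = W"
  proof (cases "p \<le> i")
    case True
    have "(\<Sum>l=n..i - p + n. z * w (l + 2 - n)) = (\<Sum>l\<in>{2 + (n - 2)..J + (n - 2)}. z * w (l + 2 - n))"
      unfolding J_def using True n2 by (intro sum.cong refl) auto
    also have "\<dots> = (\<Sum>j=2..J. z * w (j + (n - 2) + 2 - n))" by (rule sum.shift_bounds_cl_nat_ivl)
    also have "\<dots> = W" unfolding W_def
    proof (intro sum.cong refl)
      fix j assume "j \<in> {2..J}"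
      have "j + (n - 2) + 2 - n = j" using n2 by simp
      then show "z * w (j + (n - 2) + 2 - n) = z * w j" by (simp only:)
    qed
    finally show ?thesis unfolding Wt_def using True by simp
  next
    case False
    then have "J = 1" unfolding J_def using i by simp
    then show ?thesis unfolding Wt_def W_def using False by simp
  qed
  have hY: "Yt i = E + W" unfolding Yt_def hE hW ..
  have E1: "E = 1 + (\<Sum>k\<in>{1..<p}. u k)"
  proof -
    have "{..<p} = insert 0 {1..<p}" using p_pos by auto
    then show ?thesis unfolding E_def by (simp add: u_0)
  qed
  have vE0: "vge 0 E" unfolding E_def by (intro vge_sum vu0) auto
  have vE1: "vge r (E - 1)" unfolding E1 by simp (intro vge_sum vu, auto)
  have vmin0: "0 \<le> vmin" using rat2(1) .
  have vW: "vge vmin W" unfolding W_def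
  proof (intro vge_sum)
    fix j assume "j \<in> {2..J}"
    then have j: "2 \<le> j" by simp
    have "vge (0 + (1 / (of_nat p - 1) - 1 / of_nat p ^ j)) (z * w j)"
      unfolding w_def by (intro vge_mult vz vge_pw)
    then show "vge vmin (z * w j)" using rat2(2)[OF j] by (intro vge_mono[of vmin]) auto
  qed
  have R1: "vge P ((W + E) ^ p - E ^ p - W ^ p - of_nat p * E ^ (p - 1) * W)"
    unfolding P_def by (rule vge_mono[OF rat2(3) frob_refined[OF vE0 vW vmin0]])
  have R2: "vge P (of_nat p * E ^ (p - 1) * W - of_nat p * W)"
  proof -
    have "vge r (E ^ (p - 1) - 1 ^ (p - 1))" using pow_cong[OF vE0 vge_1 vE1] .
    then have "vge (r + 1) (of_nat p * (E ^ (p - 1) - 1))" using vge_p_mult by simp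
    then have "vge (r + 1 + vmin) (of_nat p * (E ^ (p - 1) - 1) * W)" using vW by (rule vge_mult)
    moreover have "of_nat p * (E ^ (p - 1) - 1) * W = of_nat p * E ^ (p - 1) * W - of_nat p * W"
      by (simp add: algebra_simps)
    ultimately show ?thesis unfolding P_def using vge_mono[OF rat2(4)] by simp
  qed
  have R3: "vge P (W ^ p - (\<Sum>j\<in>{2..J}. (z * w j) ^ p))"
  proof -
    have "vge (1 + 2 * vmin) (W ^ p - (\<Sum>j\<in>{2..J}. (z * w j) ^ p))" unfolding W_def
    proof (intro frob_sum)
      fix j assume "j \<in> {2..J}"
      then have "vge vmin W \<and> True" using vW by simp
      show "vge vmin (z * w j)"
      proof -
        have j: "2 \<le> j" using \<open>j \<in> {2..J}\<close> by simp
        have "vge (0 + (1 / (of_nat p - 1) - 1 / of_nat p ^ j)) (z * w j)"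
          unfolding w_def by (intro vge_mult vz vge_pw)
        then show ?thesis using rat2(2)[OF j] by (intro vge_mono[of vmin]) auto
      qed
    qed (simp_all add: vmin0)
    then show ?thesis unfolding P_def by (rule vge_mono[OF rat2(3)])
  qed
  have R4: "vge P (E ^ p - (1 + of_nat p * y + (\<Sum>k\<in>{1..<p}. y ^ (k * p) / T (of_nat (fact k)))))"
    using EXP[OF vy[unfolded r_def]] unfolding E_def u_def P_def .
  define f where "f j = z * pw (P - 1 / of_nat p ^ j)" for j
  have tel: "of_nat p * W + (\<Sum>j\<in>{2..J}. (z * w j) ^ p) + of_nat p * y = z * pw (P - 1 / of_nat p ^ J)"
  proof -
    have per: "of_nat p * (z * w j) + (z * w j) ^ p = f j - f (j - 1)" if "j \<in> {2..J}" for j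
    proof -
      have j: "1 \<le> j" using that by simp
      have "of_nat p * (z * w j) = z * (pw 1 * w j)" by (simp add: pw_1)
      also have "pw 1 * w j = pw (P - 1 / of_nat p ^ j)" unfolding w_def pw_add[symmetric] P_def by (simp only: add_diff_eq)
      finally have a: "of_nat p * (z * w j) = f j" unfolding f_def .
      have "(z * w j) ^ p = z ^ p * pw (of_nat p * (1 / (of_nat p - 1) - 1 / of_nat p ^ j))"
        unfolding w_def by (simp add: power_mult_distrib pw_mult_nat)
      also have "\<dots> = - f (j - 1)" unfolding f_def z_p rat2(5)[OF j] P_def by simp
      finally show ?thesis using a by simp
    qed
    have "of_nat p * W + (\<Sum>j\<in>{2..J}. (z * w j) ^ p) = (\<Sum>j\<in>{2..J}. f j - f (j - 1))"
      unfolding W_def sum_distrib_left sum.distrib[symmetric] by (intro sum.cong refl per)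
    also have "\<dots> = f J - f 1" by (rule telescope[OF J1])
    finally have b: "of_nat p * W + (\<Sum>j\<in>{2..J}. (z * w j) ^ p) = f J - f 1" .
    have "of_nat p * y = z * (pw 1 * pw r)" unfolding y_def by (simp add: pw_1 algebra_simps)
    also have "\<dots> = f 1" unfolding f_def pw_add[symmetric] P_def rat2(6) by simp
    finally show ?thesis using b unfolding f_def by simp
  qed
  have sumeq: "(\<Sum>k\<in>{1..<p}. y ^ (k * p) / T (of_nat (fact k)))
      = (\<Sum>l = 1..p - 1. (-1) ^ l / T (of_nat (fact l)) * T \<zeta> ^ l * pw (of_nat l / (of_nat p - 1)))"
  proof -
    have "{1..<p} = {1..p - 1}" using p_pos by auto
    then show ?thesis
    proof (simp only:, intro sum.cong refl)
      fix l assume "l \<in> {1..p - 1}"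
      then have lp: "l < p" using p_pos by auto
      show "y ^ (l * p) / T (of_nat (fact l)) = (-1) ^ l / T (of_nat (fact l)) * T \<zeta> ^ l * pw (of_nat l / (of_nat p - 1))"
        by (rule u_p(2)[OF lp])
    qed
  qed
  define Bs where "Bs = (\<Sum>k\<in>{1..<p}. y ^ (k * p) / T (of_nat (fact k)))"
  have main: "vge P ((W + E) ^ p - (1 + Bs + (of_nat p * W + (\<Sum>j\<in>{2..J}. (z * w j) ^ p) + of_nat p * y)))"
    unfolding ring_id[of "(W + E) ^ p" Bs "of_nat p * W" "\<Sum>j\<in>{2..J}. (z * w j) ^ p" "of_nat p * y" "E ^ p" "W ^ p" "of_nat p * E ^ (p - 1) * W"]
    using R1 R2 R3 R4 unfolding Bs_def by (intro vge_add)
  have c: "vge P (Lambda p T pw \<zeta> i n ^ (p ^ (n - 1)) - Yt i ^ p)"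
    using rat_facts unfolding P_def by (intro vge_mono[OF _ LamN]) simp
  define Cc where "Cc = of_nat p * W + (\<Sum>j\<in>{2..J}. (z * w j) ^ p) + of_nat p * y"
  define Lm where "Lm = Lambda p T pw \<zeta> i n ^ (p ^ (n - 1))"
  have "vge P ((Lm - Yt i ^ p) + ((W + E) ^ p - (1 + Bs + Cc)))"
    using c main unfolding Cc_def Lm_def by (intro vge_add)
  moreover have "(Lm - Yt i ^ p) + ((W + E) ^ p - (1 + Bs + Cc)) = (Lm - 1) - (Bs + z * pw (P - 1 / of_nat p ^ J))"
    unfolding Cc_def tel hY by (simp add: algebra_simps)
  ultimately have "vge P ((Lm - 1) - (Bs + z * pw (P - 1 / of_nat p ^ J)))"
    by simp
  then show ?thesis unfolding Lm_def Bs_def sumeq z_def J_def P_def by (rule bigO_of_vge)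
qed

end

theorem proposition3p18:
  fixes T :: "'p::prime_card Fpbar \<Rightarrow> 'L::field"
    and v :: "'L \<Rightarrow> rat" and pw :: "rat \<Rightarrow> 'L"
    and \<zeta> :: "'p Fpbar" and p n :: nat
  assumes p_def: "p = CARD('p)" and p3: "p \<ge> 3" and n2: "n \<ge> 2"
    and Lp: "Lp_structure p T v pw"
    and zeta_root: "\<zeta> ^ (2 * (p - 1)) = 1"
    and zeta_prim: "\<forall>j. 0 < j \<and> j < 2 * (p - 1) \<longrightarrow> \<zeta> ^ j \<noteq> 1"
  shows
    "(\<forall>i. 1 \<le> i \<and> i < p - 1 \<longrightarrow>
        bigO_eq v (Lambda p T pw \<zeta> i n ^ (p ^ (n - 1)) - 1)
          (\<Sum>l = 1..i. (-1) ^ l / T (of_nat (fact l)) * T \<zeta> ^ l * pw (of_nat l / (of_nat p - 1)))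
          (1 + 1 / (of_nat p * (of_nat p - 1))))
   \<and> (\<forall>i. p - 1 \<le> i \<longrightarrow>
        bigO_eq v (Lambda p T pw \<zeta> i n ^ (p ^ (n - 1)) - 1)
          ((\<Sum>l = 1..p - 1. (-1) ^ l / T (of_nat (fact l)) * T \<zeta> ^ l * pw (of_nat l / (of_nat p - 1)))
           + T \<zeta> * pw (1 + 1 / (of_nat p - 1) - 1 / of_nat p ^ (i + 2 - p)))
          (1 + 1 / (of_nat p - 1)))"
proof -
  have pr: "Factorial_Ring.prime p" using p_def prime_card[where 'a='p] by simp
  have ch: "CHAR('p Fpbar) = p" using p_def by simp
  have zp: "\<zeta> ^ (p - 1) = -1"
  proof -
    have "(\<zeta> ^ (p - 1)) ^ 2 = 1" using zeta_root by (simp add: power_mult[symmetric] mult.commute)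
    then have "\<zeta> ^ (p - 1) = 1 \<or> \<zeta> ^ (p - 1) = -1" by (simp add: power2_eq_1_iff)
    moreover have "\<zeta> ^ (p - 1) \<noteq> 1" using zeta_prim p3 by auto
    ultimately show ?thesis by simp
  qed
  interpret lps2 p T v pw \<zeta> n
    by unfold_locales (use Lp pr p3 ch n2 zp in auto)
  show ?thesis using part1 part2 by blast
qed

end
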